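(* Let $d\ge1$ and let $P$ be a probability distribution on $\{0,1\}^d$ with $P(\nu)>0$ for all $\nu\in\{0,1\}^d$. For each $\omega\in\{0,1\}^d$, let $A_\omega$ be the $(2^d-1)\times d$ matrix with rows indexed by $\nu\in\{0,1\}^d\setminus\{\omega\}$ and entries $A_\omega(\nu,i)=1$ if $\nu_i\ne\omega_i$ and $0$ otherwise, let $b_\omega(\nu)=\ln(P(\nu)/P(\omega))$, let $\mathcal{Q}_\omega:=\{y\in\mathbb{R}^d\mid A_\omega y\le b_\omega\}$, and let $f_\omega(y):=\prod_{i=1}^d(1+e^{y_i})$. Then for each $\omega\in\{0,1\}^d$, the maximum $\max_{y\in\mathcal{Q}_\omega}f_\omega(y)$ can only be attained at a vertex of $\mathcal{Q}_\omega$.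
   Context: A vertex of $\mathcal{Q}_\omega$ is a point $y\in\mathcal{Q}_\omega$ such that $A'_\omega y=b'_\omega$ for some invertible $d\times d$ submatrix $A'_\omega$ of $A_\omega$ consisting of $d$ of its rows, with $b'_\omega$ the corresponding entries of $b_\omega$. (Via $y_i=(1-2\omega_i)\ln(q_i/(1-q_i))$, this polyhedron is the image of $\{q\in(0,1)^d: P(\omega)f_\omega(q)\le P(\nu)f_\nu(q)\ \forall\nu\}$, where $f_\omega(q)=\prod_i q_i^{-\omega_i}(1-q_i)^{\omega_i-1}$.) *)

theory Defs
  imports "HOL-Analysis.Analysis"
begin

text \<open>Binary vectors in {0,1}^d are functions 'd \<Rightarrow> bool (True = 1), 'd a finite
  index type with CARD('d) = d \<ge> 1. Real vectors in R^d are real^'d.\<close>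

definition A_mat :: "('d \<Rightarrow> bool) \<Rightarrow> ('d \<Rightarrow> bool) \<Rightarrow> 'd \<Rightarrow> real" where
  "A_mat \<omega> \<nu> i = (if \<nu> i \<noteq> \<omega> i then 1 else 0)"

definition b_vec :: "(('d \<Rightarrow> bool) \<Rightarrow> real) \<Rightarrow> ('d \<Rightarrow> bool) \<Rightarrow> ('d \<Rightarrow> bool) \<Rightarrow> real" where
  "b_vec P \<omega> \<nu> = ln (P \<nu> / P \<omega>)"

definition Q_poly :: "(('d::finite \<Rightarrow> bool) \<Rightarrow> real) \<Rightarrow> ('d \<Rightarrow> bool) \<Rightarrow> (real^'d) set" where
  "Q_poly P \<omega> = {y. \<forall>\<nu>. \<nu> \<noteq> \<omega> \<longrightarrow> (\<Sum>i\<in>UNIV. A_mat \<omega> \<nu> i * y $ i) \<le> b_vec P \<omega> \<nu>}"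

definition f_obj :: "real^'d::finite \<Rightarrow> real" where
  "f_obj y = (\<Prod>i\<in>UNIV. 1 + exp (y $ i))"

definition is_vertex :: "(('d::finite \<Rightarrow> bool) \<Rightarrow> real) \<Rightarrow> ('d \<Rightarrow> bool) \<Rightarrow> real^'d \<Rightarrow> bool" where
  "is_vertex P \<omega> y \<longleftrightarrow> y \<in> Q_poly P \<omega> \<and>
     (\<exists>r :: 'd \<Rightarrow> ('d \<Rightarrow> bool). inj r \<and> (\<forall>k. r k \<noteq> \<omega>) \<and>
        invertible (\<chi> k i. A_mat \<omega> (r k) i) \<and>
        (\<chi> k i. A_mat \<omega> (r k) i) *v y = (\<chi> k. b_vec P \<omega> (r k)))"

end

theory Submission
  imports Defs
begin

lemma key_ineq:
  fixes a s :: real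
  shows "(1 + exp a)^2 \<le> (1 + exp (a + s)) * (1 + exp (a - s))"
    and "s \<noteq> 0 \<Longrightarrow> (1 + exp a)^2 < (1 + exp (a + s)) * (1 + exp (a - s))"
proof -
  have e: "(1 + exp (a + s)) * (1 + exp (a - s)) = 1 + exp a * (exp s + exp (-s)) + exp a * exp a"
    by (simp add: exp_add exp_diff exp_minus field_simps)
  have sq: "(1 + exp a)^2 = 1 + exp a * 2 + exp a * exp a"
    by (simp add: power2_eq_square algebra_simps)
  have g: "exp s + exp (-s) \<ge> 2"
  proof -
    have "(exp s - 1)^2 \<ge> 0" by simp
    hence "exp s * exp s + 1 \<ge> 2 * exp s" by (simp add: power2_eq_square algebra_simps)
    thus ?thesis by (simp add: exp_minus field_simps)
  qed
  show "(1 + exp a)^2 \<le> (1 + exp (a + s)) * (1 + exp (a - s))"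
    unfolding e sq using g by (simp add: mult_left_mono)
  assume "s \<noteq> 0"
  have g2: "exp s + exp (-s) > 2"
  proof -
    have "exp s \<noteq> 1" using \<open>s \<noteq> 0\<close> by simp
    hence "(exp s - 1)^2 > 0" by simp
    hence "exp s * exp s + 1 > 2 * exp s" by (simp add: power2_eq_square algebra_simps)
    thus ?thesis by (simp add: exp_minus field_simps)
  qed
  show "(1 + exp a)^2 < (1 + exp (a + s)) * (1 + exp (a - s))"
    unfolding e sq using g2 by simp
qed

lemma f_prod_ineq:
  fixes y v :: "real^'d::finite"
  assumes "v \<noteq> 0"
  shows "f_obj y ^ 2 < f_obj (y + v) * f_obj (y - v)"
proof -
  obtain j where j: "v $ j \<noteq> 0" using assms by (metis vec_eq_iff zero_index)
  let ?F = "\<lambda>i. (1 + exp (y $ i))^2"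
  let ?G = "\<lambda>i. (1 + exp (y $ i + v $ i)) * (1 + exp (y $ i - v $ i))"
  have "f_obj y ^ 2 = (\<Prod>i\<in>UNIV. ?F i)" unfolding f_obj_def by (simp add: prod_power_distrib)
  also have "\<dots> = ?F j * (\<Prod>i\<in>UNIV - {j}. ?F i)"
    by (simp add: prod.remove)
  also have "\<dots> < ?G j * (\<Prod>i\<in>UNIV - {j}. ?G i)"
  proof (rule mult_less_le_imp_less)
    show "?F j < ?G j" using key_ineq(2)[OF j] by simp
    show "(\<Prod>i\<in>UNIV - {j}. ?F i) \<le> (\<Prod>i\<in>UNIV - {j}. ?G i)"
      by (rule prod_mono) (simp add: key_ineq(1))
    show "0 \<le> ?F j" by simp
    show "0 < (\<Prod>i\<in>UNIV - {j}. ?F i)" by (rule prod_pos) (smt (verit) exp_gt_zero zero_less_power)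
  qed
  also have "\<dots> = (\<Prod>i\<in>UNIV. ?G i)" by (simp add: prod.remove)
  also have "\<dots> = f_obj (y + v) * f_obj (y - v)" unfolding f_obj_def
    by (simp add: prod.distrib)
  finally show ?thesis .
qed


theorem theorem1:
  fixes P :: "('d::finite \<Rightarrow> bool) \<Rightarrow> real" and \<omega> :: "'d \<Rightarrow> bool" and y :: "real^'d"
  assumes "\<forall>\<nu>. P \<nu> > 0"
    and "(\<Sum>\<nu>\<in>UNIV. P \<nu>) = 1"
    and "y \<in> Q_poly P \<omega>"
    and "\<forall>z\<in>Q_poly P \<omega>. f_obj z \<le> f_obj y"
  shows "is_vertex P \<omega> y"
proof -
  define rw :: "('d \<Rightarrow> bool) \<Rightarrow> real^'d" where "rw \<nu> = (\<chi> i. A_mat \<omega> \<nu> i)" for \<nu>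
  have sinner: "(\<Sum>i\<in>UNIV. A_mat \<omega> \<nu> i * z $ i) = rw \<nu> \<bullet> z" for \<nu> z
    by (simp add: rw_def inner_vec_def)
  have Qiff: "z \<in> Q_poly P \<omega> \<longleftrightarrow> (\<forall>\<nu>. \<nu> \<noteq> \<omega> \<longrightarrow> rw \<nu> \<bullet> z \<le> b_vec P \<omega> \<nu>)" for z
    unfolding Q_poly_def sinner by simp
  define S where "S = {\<nu>. \<nu> \<noteq> \<omega> \<and> rw \<nu> \<bullet> y = b_vec P \<omega> \<nu>}"
  define R where "R = rw ` S"
  have yQ: "\<And>\<nu>. \<nu> \<noteq> \<omega> \<Longrightarrow> rw \<nu> \<bullet> y \<le> b_vec P \<omega> \<nu>" using assms(3) Qiff by blast
  show ?thesis
  proof (cases "dim R < DIM(real^'d)")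
    case True
    then obtain v :: "real^'d" where v0: "v \<noteq> 0" and vorth: "\<And>x. x \<in> span R \<Longrightarrow> orthogonal v x"
      using orthogonal_to_subspace_exists[OF True] by blast
    have vS: "rw \<nu> \<bullet> v = 0" if "\<nu> \<in> S" for \<nu>
      using vorth[of "rw \<nu>"] that span_base[of "rw \<nu>" R] unfolding R_def orthogonal_def
      by (auto simp: inner_commute)
    have ev1: "\<forall>\<^sub>F t in at_right 0. (\<nu> \<noteq> \<omega> \<longrightarrow> rw \<nu> \<bullet> (y + t *\<^sub>R v) \<le> b_vec P \<omega> \<nu>
                 \<and> rw \<nu> \<bullet> (y - t *\<^sub>R v) \<le> b_vec P \<omega> \<nu>)" for \<nu>
    proof (cases "\<nu> \<in> S")
      case True
      then show ?thesis using vS[OF True] by (simp add: S_def inner_add_right inner_diff_right)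
    next
      case False
      show ?thesis
      proof (cases "\<nu> = \<omega>")
        case True then show ?thesis by simp
      next
        case ne: False
        with False yQ[OF ne] have lt: "rw \<nu> \<bullet> y < b_vec P \<omega> \<nu>" by (auto simp: S_def)
        have t1: "((\<lambda>t. rw \<nu> \<bullet> y + t * (rw \<nu> \<bullet> v)) \<longlongrightarrow> rw \<nu> \<bullet> y + 0 * (rw \<nu> \<bullet> v)) (at_right 0)"
          by (intro tendsto_intros)
        have t2: "((\<lambda>t. rw \<nu> \<bullet> y - t * (rw \<nu> \<bullet> v)) \<longlongrightarrow> rw \<nu> \<bullet> y - 0 * (rw \<nu> \<bullet> v)) (at_right 0)"
          by (intro tendsto_intros)
        have e1: "\<forall>\<^sub>F t in at_right 0. rw \<nu> \<bullet> y + t * (rw \<nu> \<bullet> v) < b_vec P \<omega> \<nu>"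
          using order_tendstoD(2)[OF t1] lt by simp
        have e2: "\<forall>\<^sub>F t in at_right 0. rw \<nu> \<bullet> y - t * (rw \<nu> \<bullet> v) < b_vec P \<omega> \<nu>"
          using order_tendstoD(2)[OF t2] lt by simp
        show ?thesis using eventually_conj[OF e1 e2]
          by (rule eventually_mono) (simp add: inner_add_right inner_diff_right)
      qed
    qed
    have "\<forall>\<^sub>F t in at_right 0. (0::real) < t \<and> (\<forall>\<nu>. \<nu> \<noteq> \<omega> \<longrightarrow> rw \<nu> \<bullet> (y + t *\<^sub>R v) \<le> b_vec P \<omega> \<nu>
                 \<and> rw \<nu> \<bullet> (y - t *\<^sub>R v) \<le> b_vec P \<omega> \<nu>)"
    proof -
      have ev2: "\<forall>\<^sub>F t in at_right 0. \<forall>\<nu>. (\<nu> \<noteq> \<omega> \<longrightarrow> rw \<nu> \<bullet> (y + t *\<^sub>R v) \<le> b_vec P \<omega> \<nu>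
                 \<and> rw \<nu> \<bullet> (y - t *\<^sub>R v) \<le> b_vec P \<omega> \<nu>)"
        by (rule eventually_all_finite) (rule ev1)
      show ?thesis using eventually_conj[OF eventually_at_right_less ev2] by simp
    qed
    from eventually_happens'[OF trivial_limit_at_right_real this] obtain t :: real where tpos: "0 < t" and
      tQ: "\<forall>\<nu>. \<nu> \<noteq> \<omega> \<longrightarrow> rw \<nu> \<bullet> (y + t *\<^sub>R v) \<le> b_vec P \<omega> \<nu> \<and> rw \<nu> \<bullet> (y - t *\<^sub>R v) \<le> b_vec P \<omega> \<nu>"
      by blast
    have z1: "y + t *\<^sub>R v \<in> Q_poly P \<omega>" and z2: "y - t *\<^sub>R v \<in> Q_poly P \<omega>"
      using tQ Qiff by blast+
    have f1: "f_obj (y + t *\<^sub>R v) \<le> f_obj y" and f2: "f_obj (y - t *\<^sub>R v) \<le> f_obj y"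
      using assms(4) z1 z2 by blast+
    have fpos: "0 < f_obj z" for z :: "real^'d"
      unfolding f_obj_def by (rule prod_pos) (smt (verit) exp_gt_zero)
    have "f_obj (y + t *\<^sub>R v) * f_obj (y - t *\<^sub>R v) \<le> f_obj y * f_obj y"
      by (rule mult_mono[OF f1 f2]) (use fpos in \<open>auto intro: less_imp_le\<close>)
    moreover have "t *\<^sub>R v \<noteq> 0" using tpos v0 by simp
    from f_prod_ineq[OF this, of y] have "f_obj y ^ 2 < f_obj (y + t *\<^sub>R v) * f_obj (y - t *\<^sub>R v)" .
    ultimately show ?thesis by (simp add: power2_eq_square)
  next
    case False
    then have dimR: "dim R = CARD('d)"
      using dim_subset_UNIV_cart[of R] by simp
    obtain B where BR: "B \<subseteq> R" and Bind: "independent B" and Bcard: "card B = dim R"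
      by (rule basis_exists)
    have "finite B" using Bind by (rule finiteI_independent)
    then obtain g where g: "bij_betw g (UNIV::'d set) B"
      using finite_same_card_bij[of "UNIV::'d set" B] Bcard dimR by auto
    have gB: "g k \<in> R" for k using g BR by (auto simp: bij_betw_def)
    define r where "r k = (SOME \<nu>. \<nu> \<in> S \<and> rw \<nu> = g k)" for k
    have r: "r k \<in> S \<and> rw (r k) = g k" for k
    proof -
      have "\<exists>\<nu>. \<nu> \<in> S \<and> rw \<nu> = g k" using gB[of k] by (auto simp: R_def)
      then show ?thesis unfolding r_def by (rule someI_ex)
    qed
    have injr: "inj r"
    proof (rule injI)
      fix a b assume "r a = r b"
      then have "g a = g b" using r[of a] r[of b] by metis
      then show "a = b" using g by (auto simp: bij_betw_def inj_on_def)
    qed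
    define M :: "real^'d^'d" where "M = (\<chi> k i. A_mat \<omega> (r k) i)"
    have rowM: "row k M = g k" for k
      using r[of k] by (simp add: M_def row_def rw_def)
    have "rows M = B"
      using g rowM by (auto simp: rows_def bij_betw_def)
    have indB: "vec.independent B" using Bind by (simp add: dependent_vec_eq)
    have ginj: "inj g" using g by (simp add: bij_betw_def)
    have "\<exists>A'. M ** A' = mat 1"
      unfolding matrix_right_invertible_independent_rows
    proof (intro allI impI)
      fix c :: "'d \<Rightarrow> real" and i
      assume h: "(\<Sum>i\<in>UNIV. c i *s row i M) = 0"
      define u where "u v = c (inv_into UNIV g v)" for v
      have ug: "u (g k) = c k" for k using ginj by (simp add: u_def)
      have "(\<Sum>v\<in>B. u v *s v) = (\<Sum>k\<in>UNIV. u (g k) *s g k)"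
        using sum.reindex_bij_betw[OF g, of "\<lambda>v. u v *s v"] by simp
      also have "\<dots> = 0" using h by (simp add: ug rowM)
      finally have "(\<Sum>v\<in>B. u v *s v) = 0" .
      then have "u (g i) = 0"
        using indB g unfolding vec.independent_explicit by (auto simp: bij_betw_def)
      then show "c i = 0" by (simp add: ug)
    qed
    then have invM: "invertible M" by (simp add: invertible_right_inverse)
    have eq: "M *v y = (\<chi> k. b_vec P \<omega> (r k))"
    proof -
      have "(M *v y) $ k = b_vec P \<omega> (r k)" for k
      proof -
        have "(M *v y) $ k = (\<Sum>i\<in>UNIV. A_mat \<omega> (r k) i * y $ i)"
          by (simp add: M_def matrix_vector_mult_def)
        also have "\<dots> = rw (r k) \<bullet> y" by (rule sinner)
        also have "\<dots> = b_vec P \<omega> (r k)" using r[of k] unfolding S_def by blast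
        finally show ?thesis .
      qed
      then show ?thesis by (simp add: vec_eq_iff)
    qed
    have rne: "\<forall>k. r k \<noteq> \<omega>" using r by (simp add: S_def)
    show ?thesis unfolding is_vertex_def
      using assms(3) injr rne invM eq unfolding M_def by (intro conjI exI[of _ r]) simp_all
  qed
qed

end
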